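(* Let $y_n$ denote the number of unlabelled rooted trees (Pólya trees) with $n$ vertices and $y(x)=\sum_{n\ge1}y_nx^n$. Then there is no formal power series $\phi(z)=\sum_{j\ge0}\phi_jz^j$ with non-negative coefficients $\phi_j\ge 0$ such that $y(x)=x\,\phi(y(x))$. In other words, Pólya trees are not simply generated.
   Context: A Pólya tree is an unlabelled rooted tree, i.e. rooted trees are counted up to root-preserving isomorphism. The generating function satisfies $y(x)=x\exp\left(\sum_{i\ge1}y(x^i)/i\right)$, and $y(x)=x+x^2+2x^3+4x^4+9x^5+\cdots$. A class of trees is called simply generated if its generating function $y(x)$ satisfies $y(x)=x\phi(y(x))$ for some power series $\phi$ with non-negative coefficients. *)

theory Defs
  imports "HOL-Library.Multiset" "HOL-Computational_Algebra.Formal_Power_Series"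
begin

text \<open>Two such values are equal exactly when the
corresponding rooted trees are isomorphic (root-preserving).\<close>
datatype rtree = Node "rtree multiset"

primrec nvert :: "rtree \<Rightarrow> nat" where
  "nvert (Node ts) = 1 + sum_mset (image_mset nvert ts)"

definition polya_count :: "nat \<Rightarrow> nat" where
  "polya_count n = card {t. nvert t = n}"

definition polya_gf :: "real fps" where
  "polya_gf = Abs_fps (\<lambda>n. real (polya_count n))"

end

theory Submission
  imports Defs
begin

function Fo :: "nat \<Rightarrow> rtree multiset set" where
  "Fo 0 = {{#}}"
| "Fo (Suc m) = (\<Union>k\<in>set [0..<Suc m]. (\<lambda>(t,M). add_mset t M) ` ((Node ` Fo k) \<times> Fo (m - k)))"
  by pat_completeness auto
termination by (relation "measure id") auto


lemma nvert_pos: "nvert t \<ge> 1"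
  by (cases t) auto

lemma sum_zero: "sum_mset (image_mset nvert M) = 0 \<longleftrightarrow> M = {#}"
proof
  assume "sum_mset (image_mset nvert M) = 0"
  then show "M = {#}"
  proof (cases M)
    case (add x N)
    assume "sum_mset (image_mset nvert M) = 0"
    then have "nvert x = 0" using add by simp
    then show ?thesis using nvert_pos[of x] by simp
  qed
qed simp

lemma Fo_char: "Fo m = {M. sum_mset (image_mset nvert M) = m}"
proof (induction m rule: less_induct)
  case (less m)
  show ?case
  proof (cases m)
    case 0
    then show ?thesis using sum_zero by auto
  next
    case (Suc n)
    have IH: "\<And>k. k \<le> n \<Longrightarrow> Fo k = {M. sum_mset (image_mset nvert M) = k}"
      using less Suc by auto
    show ?thesis
    proof (rule set_eqI, rule iffI)
      fix M assume "M \<in> Fo m"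
      then have "M \<in> (\<Union>k\<in>set [0..<Suc n]. (\<lambda>(t,M). add_mset t M) ` ((Node ` Fo k) \<times> Fo (n - k)))"
        using Suc by (simp only: Fo.simps)
      then obtain k where k0: "k \<in> set [0..<Suc n]" and
        "M \<in> (\<lambda>(t,M). add_mset t M) ` ((Node ` Fo k) \<times> Fo (n - k))"
        by (rule UN_E)
      then obtain p where p: "p \<in> (Node ` Fo k) \<times> Fo (n - k)" and Mp: "M = (\<lambda>(t,M). add_mset t M) p"
        by blast
      from k0 have k: "k \<le> n" by auto
      from p obtain N M' where N: "N \<in> Fo k" and M': "M' \<in> Fo (n - k)"
        and pe: "p = (Node N, M')" by blast
      from Mp pe have M: "M = add_mset (Node N) M'" by simp
      from N M' k IH[of k] IH[of "n-k"] have "sum_mset (image_mset nvert N) = k"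
        "sum_mset (image_mset nvert M') = n - k" by auto
      then show "M \<in> {M. sum_mset (image_mset nvert M) = m}"
        using M k Suc by simp
    next
      fix M assume "M \<in> {M. sum_mset (image_mset nvert M) = m}"
      then have sM: "sum_mset (image_mset nvert M) = Suc n" using Suc by simp
      then have "M \<noteq> {#}" by auto
      then obtain t M' where M: "M = add_mset t M'" by (cases M) auto
      obtain N where t: "t = Node N" by (cases t) auto
      define k where "k = sum_mset (image_mset nvert N)"
      have eq: "1 + k + sum_mset (image_mset nvert M') = Suc n"
        using sM M t k_def by simp
      then have kn: "k \<le> n" by simp
      have "N \<in> Fo k" using IH[OF kn] k_def by simp
      moreover have "M' \<in> Fo (n - k)" using IH[of "n-k"] eq by simp
      ultimately show "M \<in> Fo m"
        using Suc M t kn by (auto intro!: bexI[of _ k] image_eqI[of _ _ "(Node N, M')"])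
    qed
  qed
qed

lemma count_Suc: "polya_count (Suc n) = card (Fo n)"
proof -
  have "{t. nvert t = Suc n} = Node ` Fo n"
  proof (rule set_eqI)
    fix t show "t \<in> {t. nvert t = Suc n} \<longleftrightarrow> t \<in> Node ` Fo n"
      by (cases t) (auto simp: Fo_char)
  qed
  moreover have "inj Node" by (auto simp: inj_def)
  ultimately show ?thesis unfolding polya_count_def
    by (simp add: card_image inj_on_subset)
qed

lemma count0: "polya_count 0 = 0"
proof -
  have "\<And>t. nvert t \<noteq> 0" using nvert_pos by (metis not_one_le_zero)
  then have e: "{t. nvert t = 0} = {}" by auto
  show ?thesis unfolding polya_count_def by (simp add: e)
qed

lemma c1: "polya_count 1 = 1"
proof -
  have "card (Fo 0) = 1" by code_simp
  then show ?thesis using count_Suc[of 0] by (simp add: numeral_eq_Suc)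
qed
lemma c2: "polya_count 2 = 1"
proof -
  have "card (Fo 1) = 1" by code_simp
  then show ?thesis using count_Suc[of 1] by (simp add: numeral_eq_Suc)
qed
lemma c3: "polya_count 3 = 2"
proof -
  have "card (Fo 2) = 2" by code_simp
  then show ?thesis using count_Suc[of 2] by (simp add: numeral_eq_Suc)
qed
lemma c4: "polya_count 4 = 4"
proof -
  have "card (Fo 3) = 4" by code_simp
  then show ?thesis using count_Suc[of 3] by (simp add: numeral_eq_Suc)
qed
lemma c5: "polya_count 5 = 9"
proof -
  have "card (Fo 4) = 9" by code_simp
  then show ?thesis using count_Suc[of 4] by (simp add: numeral_eq_Suc)
qed
lemma c6: "polya_count 6 = 20"
proof -
  have "card (Fo 5) = 20" by code_simp
  then show ?thesis using count_Suc[of 5] by (simp add: numeral_eq_Suc)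
qed

lemma ys: "fps_nth polya_gf 0 = 0" "fps_nth polya_gf (Suc 0) = 1" "fps_nth polya_gf (Suc (Suc 0)) = 1"
  "fps_nth polya_gf (Suc (Suc (Suc 0))) = 2" "fps_nth polya_gf (Suc (Suc (Suc (Suc 0)))) = 4"
  "fps_nth polya_gf (Suc (Suc (Suc (Suc (Suc 0))))) = 9"
  "fps_nth polya_gf (Suc (Suc (Suc (Suc (Suc (Suc 0)))))) = 20"
  using count0 c1 c2 c3 c4 c5 c6 by (simp_all add: polya_gf_def numeral_eq_Suc)

theorem mainTheorem1:
  shows "\<not> (\<exists>\<phi> :: real fps. (\<forall>j. fps_nth \<phi> j \<ge> 0) \<and>
            polya_gf = fps_X * fps_compose \<phi> polya_gf)"
proof
  assume "\<exists>\<phi> :: real fps. (\<forall>j. fps_nth \<phi> j \<ge> 0) \<and>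
            polya_gf = fps_X * fps_compose \<phi> polya_gf"
  then obtain \<phi> :: "real fps" where nn: "\<forall>j. fps_nth \<phi> j \<ge> 0" and
    eq: "polya_gf = fps_X * fps_compose \<phi> polya_gf" by blast
  have e: "fps_nth polya_gf (Suc n) = (\<Sum>i=0..n. fps_nth \<phi> i * fps_nth (polya_gf ^ i) n)" for n
  proof -
    have "fps_nth polya_gf (Suc n) = fps_nth (fps_X * fps_compose \<phi> polya_gf) (Suc n)" using eq by simp
    also have "\<dots> = (\<Sum>i=0..n. fps_nth \<phi> i * fps_nth (polya_gf ^ i) n)"
      by (simp add: fps_compose_nth)
    finally show ?thesis .
  qed
  have e0: "fps_nth \<phi> 0 = 1" using e[of 0] by (simp add: ys)
  have e1: "fps_nth \<phi> (Suc 0) = 1" using e[of 1] e0 by (simp add: ys fps_mult_nth numeral_eq_Suc)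
  have e2: "fps_nth \<phi> 2 = 1" using e[of 2] e0 e1
    by (simp add: ys fps_mult_nth numeral_eq_Suc power_Suc)
  have e3: "fps_nth \<phi> 3 = 0" using e[of 3] e0 e1 e2
    by (simp add: ys fps_mult_nth numeral_eq_Suc power_Suc)
  have e4: "fps_nth \<phi> 4 = 0" using e[of 4] e0 e1 e2 e3
    by (simp add: ys fps_mult_nth numeral_eq_Suc power_Suc)
  have e5: "fps_nth \<phi> 5 = -1" using e[of 5] e0 e1 e2 e3 e4
    by (simp add: ys fps_mult_nth numeral_eq_Suc power_Suc)
  show False using e5 nn by (metis neg_0_le_iff_le not_one_le_zero)
qed
end
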